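(* Let $G$ be a connected graph with $|V(G)| \ge 3$. Then $\mathrm{Dist}'(G) \le \det'(G) + 1$.
   Context: The distinguishing index $\mathrm{Dist}'(G)$ is the minimum number of colors in a coloring of the edges of $G$ (not necessarily proper) such that the only automorphism of $G$ preserving every edge color is the identity. For a graph $G$ with at most one isolated vertex and no component isomorphic to $K_2$, an edge subset $T$ is an edge determining set if the only automorphism $\phi$ of $G$ satisfying $\{\phi(u),\phi(v)\}=\{u,v\}$ for all $\{u,v\}\in T$ is the identity; the determining index $\det'(G)$ is the minimum size of an edge determining set. *)

theory Defs
  imports Main
begin

definition graph :: "'a set \<Rightarrow> 'a set set \<Rightarrow> bool" where
  "graph V E \<longleftrightarrow> finite V \<and> (\<forall>e\<in>E. \<exists>u v. u \<in> V \<and> v \<in> V \<and> u \<noteq> v \<and> e = {u, v})"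

definition connected_graph :: "'a set \<Rightarrow> 'a set set \<Rightarrow> bool" where
  "connected_graph V E \<longleftrightarrow>
     (\<forall>u\<in>V. \<forall>v\<in>V. \<exists>p. p \<noteq> [] \<and> hd p = u \<and> last p = v \<and> set p \<subseteq> V \<and>
        (\<forall>i. Suc i < length p \<longrightarrow> {p ! i, p ! Suc i} \<in> E))"

text \<open>Automorphisms, as permutations of V (values outside V are irrelevant).\<close>

definition automorphism :: "'a set \<Rightarrow> 'a set set \<Rightarrow> ('a \<Rightarrow> 'a) \<Rightarrow> bool" where
  "automorphism V E \<phi> \<longleftrightarrow> bij_betw \<phi> V V \<and>
     (\<forall>u\<in>V. \<forall>v\<in>V. {u, v} \<in> E \<longleftrightarrow> {\<phi> u, \<phi> v} \<in> E)"

definition distinguishing_edge_colouring ::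
  "'a set \<Rightarrow> 'a set set \<Rightarrow> ('a set \<Rightarrow> nat) \<Rightarrow> bool" where
  "distinguishing_edge_colouring V E c \<longleftrightarrow>
     (\<forall>\<phi>. automorphism V E \<phi> \<and> (\<forall>e\<in>E. c (\<phi> ` e) = c e) \<longrightarrow> (\<forall>v\<in>V. \<phi> v = v))"

definition distinguishing_index :: "'a set \<Rightarrow> 'a set set \<Rightarrow> nat" where
  "distinguishing_index V E = (LEAST k. \<exists>c. (\<forall>e\<in>E. c e < k) \<and> distinguishing_edge_colouring V E c)"

definition edge_determining_set :: "'a set \<Rightarrow> 'a set set \<Rightarrow> 'a set set \<Rightarrow> bool" where
  "edge_determining_set V E T \<longleftrightarrow> T \<subseteq> E \<and>
     (\<forall>\<phi>. automorphism V E \<phi> \<and> (\<forall>e\<in>T. \<phi> ` e = e) \<longrightarrow> (\<forall>v\<in>V. \<phi> v = v))"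

definition determining_index :: "'a set \<Rightarrow> 'a set set \<Rightarrow> nat" where
  "determining_index V E = (LEAST k. \<exists>T. edge_determining_set V E T \<and> card T = k)"

end

theory Submission
  imports Defs
begin

lemma fix_edge_aux:
  assumes "\<phi> ` {y, z} = {y, z}" "\<phi> y \<noteq> y"
  shows "z = \<phi> y"
  using assms by auto

lemma E_det:
  assumes "graph V E" and "connected_graph V E" and "card V \<ge> 3"
  shows "edge_determining_set V E E"
  unfolding edge_determining_set_def
proof (intro conjI allI impI ballI)
  show "E \<subseteq> E" by simp
  fix \<phi> v
  assume H: "automorphism V E \<phi> \<and> (\<forall>e\<in>E. \<phi> ` e = e)" and vV: "v \<in> V"
  have bij: "bij_betw \<phi> V V" and fx: "\<And>e. e \<in> E \<Longrightarrow> \<phi> ` e = e"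
    using H unfolding automorphism_def by auto
  have F: "\<And>y z. {y, z} \<in> E \<Longrightarrow> \<phi> y \<noteq> y \<Longrightarrow> z = \<phi> y"
    by (rule fix_edge_aux[OF fx])
  show "\<phi> v = v"
  proof (rule ccontr)
    assume nv: "\<phi> v \<noteq> v"
    define w where "w = \<phi> v"
    have finV: "finite V" using assms(1) unfolding graph_def by auto
    have "card {v, w} \<le> 2" by (simp add: card_insert_le_m1)
    have "\<not> V \<subseteq> {v, w}"
    proof
      assume "V \<subseteq> {v, w}"
      hence "card V \<le> card {v, w}" by (rule card_mono[rotated]) simp
      thus False using \<open>card {v, w} \<le> 2\<close> assms(3) by simp
    qed
    then obtain x where xV: "x \<in> V" and xn: "x \<notin> {v, w}" by blast
    obtain p where p: "p \<noteq> []" "hd p = v" "last p = x" "set p \<subseteq> V"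
      "\<And>i. Suc i < length p \<Longrightarrow> {p ! i, p ! Suc i} \<in> E"
      using assms(2) vV xV unfolding connected_graph_def by blast
    have len: "Suc 0 < length p"
    proof (rule ccontr)
      assume "\<not> Suc 0 < length p"
      with p(1) have "length p = 1" by (cases p) auto
      then obtain a where "p = [a]" by (cases p) auto
      with p(2,3) xn show False by auto
    qed
    have p0: "p ! 0 = v" using p(1,2) by (simp add: hd_conv_nth)
    have e1: "{v, p ! 1} \<in> E" using p(5)[of 0] len p0 by simp
    hence "p ! 1 = w" using F[OF e1 nv] w_def by simp
    hence evw: "{v, w} \<in> E" using e1 by simp
    have nw: "\<phi> w \<noteq> w"
    proof
      assume "\<phi> w = w"
      moreover have "w \<in> V" using bij vV w_def bij_betwE by blast
      ultimately have "w = v" using inj_onD[of \<phi> V w v] bij vV w_def unfolding bij_betw_def by simp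
      thus False using nv w_def by simp
    qed
    have "{w, v} \<in> E" using evw by (simp add: insert_commute)
    hence pw: "\<phi> w = v" using F[OF _ nw] by simp
    have all: "\<forall>i. i < length p \<longrightarrow> p ! i \<in> {v, w}"
    proof (intro allI)
      fix i show "i < length p \<longrightarrow> p ! i \<in> {v, w}"
      proof (induction i)
        case 0 then show ?case using p0 by simp
      next
        case (Suc i)
        show ?case
        proof
          assume "Suc i < length p"
          hence ed: "{p ! i, p ! Suc i} \<in> E" and ih: "p ! i \<in> {v, w}" using p(5) Suc by auto
          show "p ! Suc i \<in> {v, w}"
          proof (cases "p ! i = v")
            case True then show ?thesis using F[OF ed] nv w_def by auto
          next
            case False then have "p ! i = w" using ih by auto
            then show ?thesis using F[OF ed] nw pw by auto
          qed
        qed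
      qed
    qed
    have "last p = p ! (length p - 1)" using p(1) by (simp add: last_conv_nth)
    hence "x \<in> {v, w}" using all p(3) len by auto
    with xn show False by simp
  qed
qed

theorem theorem3:
  fixes V :: "'a set" and E :: "'a set set"
  assumes "graph V E" and "connected_graph V E" and "card V \<ge> 3"
  shows "distinguishing_index V E \<le> determining_index V E + 1"
proof -
  have ex: "\<exists>k T. edge_determining_set V E T \<and> card T = k"
    using E_det[OF assms] by blast
  have "\<exists>T. edge_determining_set V E T \<and> card T = determining_index V E"
    using LeastI_ex[OF ex] unfolding determining_index_def by simp
  then obtain T where T: "edge_determining_set V E T" "card T = determining_index V E" by blast
  have finV: "finite V" using assms(1) unfolding graph_def by auto
  have "E \<subseteq> Pow V" using assms(1) unfolding graph_def by auto
  hence finE: "finite E" by (rule finite_subset) (simp add: finV)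
  have TE: "T \<subseteq> E" using T(1) unfolding edge_determining_set_def by auto
  hence finT: "finite T" using finE by (rule finite_subset)
  obtain h where h: "bij_betw h T {0..<card T}" using ex_bij_betw_finite_nat[OF finT] by blast
  define c where "c e = (if e \<in> T then Suc (h e) else 0)" for e
  have bound: "\<forall>e\<in>E. c e < card T + 1"
    using h unfolding c_def bij_betw_def by auto
  have dist: "distinguishing_edge_colouring V E c"
    unfolding distinguishing_edge_colouring_def
  proof (intro allI impI)
    fix \<phi> assume H: "automorphism V E \<phi> \<and> (\<forall>e\<in>E. c (\<phi> ` e) = c e)"
    have fx: "\<forall>e\<in>T. \<phi> ` e = e"
    proof
      fix e assume eT: "e \<in> T"
      hence eE: "e \<in> E" using TE by auto
      then obtain u v where uv: "u \<in> V" "v \<in> V" "e = {u, v}" using assms(1) unfolding graph_def by blast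
      have img: "\<phi> ` e = {\<phi> u, \<phi> v}" using uv by auto
      have "{\<phi> u, \<phi> v} \<in> E" using H uv eE unfolding automorphism_def by blast
      hence iE: "\<phi> ` e \<in> E" using img by simp
      have "c (\<phi> ` e) = c e" using H eE by blast
      hence "c (\<phi> ` e) = Suc (h e)" using eT c_def by simp
      hence iT: "\<phi> ` e \<in> T" and hh: "h (\<phi> ` e) = h e" unfolding c_def by (auto split: if_splits)
      show "\<phi> ` e = e" using h eT iT hh unfolding bij_betw_def by (metis inj_onD)
    qed
    have "\<forall>\<psi>. automorphism V E \<psi> \<and> (\<forall>e\<in>T. \<psi> ` e = e) \<longrightarrow> (\<forall>v\<in>V. \<psi> v = v)" using T(1) unfolding edge_determining_set_def by simp
    then show "\<forall>v\<in>V. \<phi> v = v" using H fx by blast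
  qed
  have "distinguishing_index V E \<le> card T + 1"
    unfolding distinguishing_index_def by (rule Least_le) (use bound dist in blast)
  thus ?thesis using T(2) by simp
qed

end
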